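(* Let $G=(V,E)$ be a finite undirected unweighted simple graph. For $u\in V$ let $\mathcal{F}_{uu}$ be the set of spanning rooted forests of $G$ in which $u$ is a root, and let $$s(u)=\frac{1}{|\mathcal{F}_{uu}|}\sum_{F\in\mathcal{F}_{uu}}|F|_u,$$ where $|F|_u$ is the number of vertices of the tree rooted at $u$ in $F$. Define $\mathrm{ForestSim}(u,v)=\frac{\min(s(u),s(v))}{\max(s(u),s(v))}$ for $u,v\in V$. Then $\mathrm{ForestSim}$ is an admissible role similarity metric, i.e. it satisfies all of: (P1) $\mathrm{ForestSim}(u,v)\in[0,1]$ for all $u,v\in V$; (P2) $\mathrm{ForestSim}(u,v)=\mathrm{ForestSim}(v,u)$ for all $u,v$; (P3) if $u$ and $v$ are automorphically equivalent then $\mathrm{ForestSim}(u,v)=1$; (P4) if $u$ and $u'$ are automorphically equivalent then $\mathrm{ForestSim}(u,v)=\mathrm{ForestSim}(u',v)$ for every $v\in V$; (P5) writing $\mathrm{Dist}(u,v)=1-\mathrm{ForestSim}(u,v)$, one has $\mathrm{Dist}(u,v)\le\mathrm{Dist}(u,u')+\mathrm{Dist}(u',v)$ for all $u,u',v\in V$.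
   Context: A spanning forest of $G$ is an acyclic subgraph containing all vertices of $G$; a spanning rooted forest is a spanning forest with one root marked in each of its trees. An automorphism of $G$ is a bijection $f:V\to V$ such that $(f(u),f(v))\in E$ for every $(u,v)\in E$. Vertices $u,v$ are automorphically equivalent if there is an automorphism $f$ with $f(u)=v$. *)

theory Defs
  imports Complex_Main
begin

definition simple_graph :: "'a set \<Rightarrow> 'a set set \<Rightarrow> bool" where
  "simple_graph V E \<longleftrightarrow> finite V \<and> (\<forall>e\<in>E. e \<subseteq> V \<and> card e = 2)"

definition is_cycle :: "'a set set \<Rightarrow> 'a list \<Rightarrow> bool" where
  "is_cycle F xs \<longleftrightarrow> length xs \<ge> 3 \<and> distinct xs \<and>
     (\<forall>i. Suc i < length xs \<longrightarrow> {xs ! i, xs ! Suc i} \<in> F) \<and> {last xs, hd xs} \<in> F"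

definition acyclic_edges :: "'a set set \<Rightarrow> bool" where
  "acyclic_edges F \<longleftrightarrow> (\<nexists>xs. is_cycle F xs)"

text \<open>Spanning forest of G = (V,E): an acyclic subgraph containing all vertices,
  represented by its edge set (its vertex set is V).\<close>
definition spanning_forest :: "'a set \<Rightarrow> 'a set set \<Rightarrow> 'a set set \<Rightarrow> bool" where
  "spanning_forest V E F \<longleftrightarrow> F \<subseteq> E \<and> acyclic_edges F"

definition adj_rel :: "'a set set \<Rightarrow> ('a \<times> 'a) set" where
  "adj_rel F = {(x, y). {x, y} \<in> F}"

definition tree_of :: "'a set \<Rightarrow> 'a set set \<Rightarrow> 'a \<Rightarrow> 'a set" where
  "tree_of V F x = {y \<in> V. (x, y) \<in> (adj_rel F)\<^sup>*}"

definition spanning_rooted_forest :: "'a set \<Rightarrow> 'a set set \<Rightarrow> 'a set set \<times> 'a set \<Rightarrow> bool" where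
  "spanning_rooted_forest V E FR \<longleftrightarrow> (case FR of (F, R) \<Rightarrow>
     spanning_forest V E F \<and> R \<subseteq> V \<and> (\<forall>x\<in>V. \<exists>!r. r \<in> R \<and> r \<in> tree_of V F x))"

definition forests_rooted_at :: "'a set \<Rightarrow> 'a set set \<Rightarrow> 'a \<Rightarrow> ('a set set \<times> 'a set) set" where
  "forests_rooted_at V E u = {FR. spanning_rooted_forest V E FR \<and> u \<in> snd FR}"

definition forest_s :: "'a set \<Rightarrow> 'a set set \<Rightarrow> 'a \<Rightarrow> real" where
  "forest_s V E u = (\<Sum>FR\<in>forests_rooted_at V E u. real (card (tree_of V (fst FR) u)))
                     / real (card (forests_rooted_at V E u))"

definition ForestSim :: "'a set \<Rightarrow> 'a set set \<Rightarrow> 'a \<Rightarrow> 'a \<Rightarrow> real" where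
  "ForestSim V E u v = min (forest_s V E u) (forest_s V E v) / max (forest_s V E u) (forest_s V E v)"

definition ForestDist :: "'a set \<Rightarrow> 'a set set \<Rightarrow> 'a \<Rightarrow> 'a \<Rightarrow> real" where
  "ForestDist V E u v = 1 - ForestSim V E u v"

definition automorphism :: "'a set \<Rightarrow> 'a set set \<Rightarrow> ('a \<Rightarrow> 'a) \<Rightarrow> bool" where
  "automorphism V E f \<longleftrightarrow> bij_betw f V V \<and> (\<forall>x y. {x, y} \<in> E \<longrightarrow> {f x, f y} \<in> E)"

definition auto_equiv :: "'a set \<Rightarrow> 'a set set \<Rightarrow> 'a \<Rightarrow> 'a \<Rightarrow> bool" where
  "auto_equiv V E u v \<longleftrightarrow> (\<exists>f. automorphism V E f \<and> f u = v)"

end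

theory Submission
  imports Defs "HOL-Library.FuncSet"
begin

lemma qtri:
  fixes a b c :: real
  assumes "a > 0" "b > 0" "c > 0"
  shows "1 - min a c / max a c \<le> (1 - min a b / max a b) + (1 - min b c / max b c)"
proof -
  have key: "x / y + y / z \<le> 1 + x / z" if "0 < x" "x \<le> y" "y \<le> z" for x y z :: real
  proof -
    have "(z - y) * (x - y) \<le> 0" using that by (simp add: mult_nonneg_nonpos)
    hence "x * z + y * y \<le> y * z + x * y" by (simp add: algebra_simps)
    hence "(x * z + y * y) * z \<le> (y * z + x * y) * z" using that by (intro mult_right_mono) auto
    thus ?thesis using that by (simp add: field_simps algebra_simps)
  qed
  have key2: "x / y + x / z \<le> 1 + y / z" if "0 < x" "x \<le> y" "y \<le> z" for x y z :: real
  proof -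
    have "x / z \<le> y / z" using that by (simp add: divide_right_mono)
    moreover have "x / y \<le> 1" using that by simp
    ultimately show ?thesis by linarith
  qed
  have key3: "y / z + x / z \<le> 1 + x / y" if "0 < x" "x \<le> y" "y \<le> z" for x y z :: real
  proof -
    have "y / z \<le> 1" using that by simp
    moreover have "x / z \<le> x / y" using that by (simp add: divide_left_mono)
    ultimately show ?thesis by linarith
  qed
  consider "a \<le> b" "b \<le> c" | "a \<le> c" "c \<le> b" | "b \<le> a" "a \<le> c" | "b \<le> c" "c \<le> a"
    | "c \<le> a" "a \<le> b" | "c \<le> b" "b \<le> a" by linarith
  then show ?thesis
  proof cases
    case 1 then show ?thesis using key[of a b c] assms by (simp add: min_def max_def)
  next
    case 2 then show ?thesis using key3[of a c b] assms by (simp add: min_def max_def)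
  next
    case 3 then show ?thesis using key2[of b a c] assms by (simp add: min_def max_def)
  next
    case 4 then show ?thesis using key2[of b c a] assms by (auto simp add: min_def max_def)
  next
    case 5 then show ?thesis using key3[of c a b] assms by (cases "b = c") (auto simp add: min_def max_def)
  next
    case 6 then show ?thesis using key[of c b a] assms by (simp add: min_def max_def)
  qed
qed

lemma cycle_map:
  assumes "is_cycle F xs" "\<forall>a b. {a,b} \<in> F \<longrightarrow> {h a, h b} \<in> F2" "inj_on h (set xs)"
  shows "is_cycle F2 (map h xs)"
proof -
  have ne: "xs \<noteq> []" using assms(1) unfolding is_cycle_def by auto
  show ?thesis using assms ne unfolding is_cycle_def
    by (auto simp: distinct_map last_map hd_map)
qed

lemma cycle_in_V:
  assumes "is_cycle F xs" "\<forall>e\<in>F. e \<subseteq> V"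
  shows "set xs \<subseteq> V"
proof
  fix x assume "x \<in> set xs"
  then obtain i where i: "i < length xs" "x = xs ! i" by (auto simp: in_set_conv_nth)
  show "x \<in> V"
  proof (cases "Suc i < length xs")
    case True
    then have "{xs ! i, xs ! Suc i} \<in> F" using assms(1) unfolding is_cycle_def by auto
    then show ?thesis using assms(2) i by auto
  next
    case False
    have ne: "xs \<noteq> []" using i by auto
    have "i = length xs - 1" using i False by simp
    then have "x = last xs" using i ne by (simp add: last_conv_nth)
    moreover have "{last xs, hd xs} \<in> F" using assms(1) unfolding is_cycle_def by auto
    ultimately show ?thesis using assms(2) by auto
  qed
qed

lemma rtrancl_map_adj:
  assumes "(x,y) \<in> (adj_rel F)\<^sup>*" "\<forall>a b. {a,b} \<in> F \<longrightarrow> {h a, h b} \<in> F2"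
  shows "(h x, h y) \<in> (adj_rel F2)\<^sup>*"
  using assms(1)
proof (induction rule: rtrancl_induct)
  case base then show ?case by simp
next
  case (step y z)
  then have "(h y, h z) \<in> adj_rel F2" using assms(2) by (auto simp: adj_rel_def)
  then show ?case using step.IH by (meson rtrancl_into_rtrancl)
qed

locale autpair =
  fixes V :: "'a set" and E :: "'a set set" and f g :: "'a \<Rightarrow> 'a"
  assumes EV: "\<forall>e\<in>E. e \<subseteq> V \<and> card e = 2"
    and fV: "f ` V \<subseteq> V" and gV: "g ` V \<subseteq> V"
    and gf: "\<forall>x\<in>V. g (f x) = x" and fg: "\<forall>x\<in>V. f (g x) = x"
    and fE: "\<forall>x y. {x,y} \<in> E \<longrightarrow> {f x, f y} \<in> E"
    and gE: "\<forall>x y. {x,y} \<in> E \<longrightarrow> {g x, g y} \<in> E"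
begin

lemma edge_fwd: "{a,b} \<in> F \<Longrightarrow> {f a, f b} \<in> (`) f ` F"
proof -
  assume "{a,b} \<in> F"
  moreover have "{f a, f b} = f ` {a,b}" by simp
  ultimately show ?thesis by blast
qed

lemma edge_back: assumes "F \<subseteq> E" "{a,b} \<in> (`) f ` F" shows "{g a, g b} \<in> F"
proof -
  obtain e where e: "e \<in> F" "{a,b} = f ` e" using assms(2) by auto
  have eV: "e \<subseteq> V" using e(1) assms(1) EV by auto
  have "g ` {a,b} = g ` f ` e" using e by simp
  also have "\<dots> = e" using eV gf by (force simp: image_image)
  finally show ?thesis using e(1) by simp
qed

lemma img_sub: assumes "F \<subseteq> E" shows "(`) f ` F \<subseteq> E"
proof
  fix e' assume "e' \<in> (`) f ` F"
  then obtain e where e: "e \<in> F" "e' = f ` e" by auto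
  then have "e \<in> E" using assms by auto
  then obtain a b where "e = {a,b}" using EV by (auto simp: card_2_iff)
  then show "e' \<in> E" using e fE \<open>e \<in> E\<close> by auto
qed

lemma acyc: assumes "F \<subseteq> E" "acyclic_edges F" shows "acyclic_edges ((`) f ` F)"
  unfolding acyclic_edges_def
proof
  assume "\<exists>xs. is_cycle ((`) f ` F) xs"
  then obtain xs where xs: "is_cycle ((`) f ` F) xs" by blast
  have eV: "\<forall>e\<in>(`) f ` F. e \<subseteq> V"
  proof
    fix e assume "e \<in> (`) f ` F"
    then have "e \<in> E" using img_sub[OF assms(1)] by (rule rev_subsetD)
    then show "e \<subseteq> V" using EV by simp
  qed
  have sV: "set xs \<subseteq> V" using cycle_in_V[OF xs eV] .
  have "inj_on g (set xs)" by (rule inj_on_inverseI[where g=f]) (use fg sV in auto)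
  moreover have "\<forall>a b. {a,b} \<in> (`) f ` F \<longrightarrow> {g a, g b} \<in> F"
    by (intro allI impI) (rule edge_back[OF assms(1)])
  ultimately have "is_cycle F (map g xs)" using cycle_map[OF xs] by blast
  then show False using assms(2) unfolding acyclic_edges_def by blast
qed

lemma tree_img: assumes "F \<subseteq> E" "x \<in> V"
  shows "tree_of V ((`) f ` F) (f x) = f ` tree_of V F x"
proof
  show "tree_of V ((`) f ` F) (f x) \<subseteq> f ` tree_of V F x"
  proof
    fix y assume "y \<in> tree_of V ((`) f ` F) (f x)"
    then have y: "y \<in> V" "(f x, y) \<in> (adj_rel ((`) f ` F))\<^sup>*" by (auto simp: tree_of_def)
    have "(g (f x), g y) \<in> (adj_rel F)\<^sup>*"
      using rtrancl_map_adj[OF y(2)] edge_back[OF assms(1)] by blast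
    then have "g y \<in> tree_of V F x" using gf assms(2) y(1) gV by (auto simp: tree_of_def)
    moreover have "y = f (g y)" using fg y by auto
    ultimately show "y \<in> f ` tree_of V F x" by blast
  qed
next
  show "f ` tree_of V F x \<subseteq> tree_of V ((`) f ` F) (f x)"
  proof
    fix y' assume "y' \<in> f ` tree_of V F x"
    then obtain y where y: "y' = f y" "y \<in> V" "(x, y) \<in> (adj_rel F)\<^sup>*" by (auto simp: tree_of_def)
    have "(f x, f y) \<in> (adj_rel ((`) f ` F))\<^sup>*"
      using rtrancl_map_adj[OF y(3)] edge_fwd by blast
    then show "y' \<in> tree_of V ((`) f ` F) (f x)" using y fV by (auto simp: tree_of_def)
  qed
qed

lemma tree_sub: "tree_of V F x \<subseteq> V" by (auto simp: tree_of_def)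

lemma inj_f: "inj_on f V" by (rule inj_on_inverseI[where g=g]) (use gf in auto)

lemma transfer:
  assumes "FR \<in> forests_rooted_at V E u" "u \<in> V"
  shows "(((`) f ` fst FR), f ` snd FR) \<in> forests_rooted_at V E (f u)"
    "card (tree_of V ((`) f ` fst FR) (f u)) = card (tree_of V (fst FR) u)"
    "((`) g ` (`) f ` fst FR, g ` f ` snd FR) = FR"
proof -
  obtain F R where FR: "FR = (F, R)" by force
  have sf: "F \<subseteq> E" "acyclic_edges F" "R \<subseteq> V" "u \<in> R"
    and un: "\<forall>x\<in>V. \<exists>!r. r \<in> R \<and> r \<in> tree_of V F x"
    using assms(1) unfolding FR forests_rooted_at_def spanning_rooted_forest_def spanning_forest_def
    by auto
  have roots: "\<exists>!r. r \<in> f ` R \<and> r \<in> tree_of V ((`) f ` F) x'" if x': "x' \<in> V" for x'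
  proof -
    define x where "x = g x'"
    have xV: "x \<in> V" and xx: "x' = f x" using x' gV fg x_def by auto
    have T: "tree_of V ((`) f ` F) x' = f ` tree_of V F x" using tree_img[OF sf(1) xV] xx by simp
    obtain r where r: "r \<in> R" "r \<in> tree_of V F x" and ru: "\<And>r'. r' \<in> R \<and> r' \<in> tree_of V F x \<Longrightarrow> r' = r"
      using un xV by metis
    show ?thesis
    proof (rule ex1I[of _ "f r"])
      show "f r \<in> f ` R \<and> f r \<in> tree_of V ((`) f ` F) x'" using r T by auto
    next
      fix r' assume "r' \<in> f ` R \<and> r' \<in> tree_of V ((`) f ` F) x'"
      then obtain r1 t where "r1 \<in> R" "t \<in> tree_of V F x" "r' = f r1" "r' = f t" using T by auto
      moreover have "r1 \<in> V" "t \<in> V" using \<open>r1 \<in> R\<close> sf(3) \<open>t \<in> tree_of V F x\<close> tree_sub by auto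
      ultimately have "r1 = t" using inj_f by (auto dest: inj_onD)
      then show "r' = f r" using ru \<open>r1 \<in> R\<close> \<open>t \<in> tree_of V F x\<close> \<open>r' = f r1\<close> by auto
    qed
  qed
  show "(((`) f ` fst FR), f ` snd FR) \<in> forests_rooted_at V E (f u)"
  proof -
    have "f ` R \<subseteq> V" using sf(3) fV by blast
    moreover have "f u \<in> f ` R" using sf(4) by blast
    ultimately show ?thesis
      unfolding FR forests_rooted_at_def spanning_rooted_forest_def spanning_forest_def
      using img_sub[OF sf(1)] acyc[OF sf(1,2)] roots by simp
  qed
  show "card (tree_of V ((`) f ` fst FR) (f u)) = card (tree_of V (fst FR) u)"
  proof -
    have "card (f ` tree_of V F u) = card (tree_of V F u)"
      by (rule card_image[OF inj_on_subset[OF inj_f tree_sub]])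
    then show ?thesis unfolding FR using tree_img[OF sf(1) assms(2)] by simp
  qed
  have "(`) g ` (`) f ` F = F"
  proof -
    have "g ` f ` e = e" if "e \<in> F" for e
    proof -
      have "e \<subseteq> V" using that sf(1) EV by auto
      then show ?thesis using gf by (force simp: image_image)
    qed
    then show ?thesis by (force simp: image_image)
  qed
  moreover have "g ` f ` R = R" using sf(3) gf by (force simp: image_image)
  ultimately show "((`) g ` (`) f ` fst FR, g ` f ` snd FR) = FR" unfolding FR by simp
qed
end


lemma finite_E: "simple_graph V E \<Longrightarrow> finite E"
  unfolding simple_graph_def by (meson Pow_iff finite_Pow_iff finite_subset subsetI)

lemma finite_forests: assumes "simple_graph V E" shows "finite (forests_rooted_at V E u)"
proof -
  have "forests_rooted_at V E u \<subseteq> Pow E \<times> Pow V"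
    unfolding forests_rooted_at_def spanning_rooted_forest_def spanning_forest_def by auto
  moreover have "finite (Pow E \<times> Pow V)" using finite_E[OF assms] assms
    unfolding simple_graph_def by auto
  ultimately show ?thesis by (rule finite_subset)
qed

lemma s_ge1: assumes "simple_graph V E" "u \<in> V" shows "forest_s V E u \<ge> 1"
proof -
  let ?S = "forests_rooted_at V E u"
  have t0: "tree_of V {} x = {x}" if "x \<in> V" for x
    using that by (auto simp: tree_of_def adj_rel_def)
  have "({}, V) \<in> ?S"
    unfolding forests_rooted_at_def spanning_rooted_forest_def spanning_forest_def
      acyclic_edges_def is_cycle_def using assms(2) t0 by auto
  then have ne: "?S \<noteq> {}" by blast
  have fin: "finite ?S" using finite_forests[OF assms(1)] .
  have ge: "real (card (tree_of V (fst FR) u)) \<ge> 1" if "FR \<in> ?S" for FR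
  proof -
    have "u \<in> tree_of V (fst FR) u" using assms(2) by (auto simp: tree_of_def)
    moreover have "finite (tree_of V (fst FR) u)" using assms(1)
      by (auto simp: tree_of_def simple_graph_def)
    ultimately have "card (tree_of V (fst FR) u) \<ge> 1"
      by (metis One_nat_def Suc_leI card_gt_0_iff empty_iff)
    then show ?thesis by simp
  qed
  have "(\<Sum>FR\<in>?S. real (card (tree_of V (fst FR) u))) \<ge> (\<Sum>FR\<in>?S. 1)"
    by (rule sum_mono) (rule ge)
  then have "(\<Sum>FR\<in>?S. real (card (tree_of V (fst FR) u))) \<ge> real (card ?S)" by simp
  moreover have "real (card ?S) > 0" using fin ne by (simp add: card_gt_0_iff)
  ultimately show ?thesis unfolding forest_s_def by simp
qed

lemma s_aut: assumes "simple_graph V E" "automorphism V E f" "u \<in> V"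
  shows "forest_s V E (f u) = forest_s V E u"
proof -
  define g where "g = inv_into V f"
  have bij: "bij_betw f V V" and fE: "\<forall>x y. {x,y} \<in> E \<longrightarrow> {f x, f y} \<in> E"
    using assms(2) unfolding automorphism_def by auto
  have inj: "inj_on f V" and fVV: "f ` V = V" using bij by (auto simp: bij_betw_def)
  have EV: "\<forall>e\<in>E. e \<subseteq> V \<and> card e = 2" using assms(1) unfolding simple_graph_def by auto
  have gf: "\<forall>x\<in>V. g (f x) = x" using inj g_def by auto
  have fg: "\<forall>x\<in>V. f (g x) = x" using fVV g_def by (simp add: f_inv_into_f)
  have gV: "g ` V \<subseteq> V" using fVV g_def by (metis inv_into_into image_subsetI)
  have injE: "inj_on (\<lambda>e. f ` e) E"
  proof (rule inj_onI)
    fix x y assume "x \<in> E" "y \<in> E" "f ` x = f ` y"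
    then show "x = y" using inj_on_image_eq_iff[OF inj, of x y] EV by blast
  qed
  have mapE: "(\<lambda>e. f ` e) ` E \<subseteq> E"
  proof
    fix e' assume "e' \<in> (\<lambda>e. f ` e) ` E"
    then obtain e where e: "e \<in> E" "e' = f ` e" by auto
    then obtain a b where "e = {a,b}" using EV by (auto simp: card_2_iff)
    then show "e' \<in> E" using e fE by auto
  qed
  have surjE: "(\<lambda>e. f ` e) ` E = E" using endo_inj_surj[OF finite_E[OF assms(1)] mapE injE] .
  have gE: "\<forall>x y. {x,y} \<in> E \<longrightarrow> {g x, g y} \<in> E"
  proof (intro allI impI)
    fix x y assume "{x,y} \<in> E"
    then have "{x,y} \<in> (\<lambda>e. f ` e) ` E" by (simp only: surjE)
    then obtain e where e: "e \<in> E" "{x,y} = f ` e" by (rule imageE)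
    have "g ` {x,y} = e" unfolding g_def e(2) using inj EV e(1) by (simp add: inv_into_image_cancel)
    then show "{g x, g y} \<in> E" using e(1) by simp
  qed
  have fV: "f ` V \<subseteq> V" using fVV by simp
  interpret A: autpair V E f g unfolding autpair_def using EV fV gV gf fg fE gE
    by blast
  interpret B: autpair V E g f unfolding autpair_def using EV fV gV gf fg fE gE
    by blast
  have fu: "f u \<in> V" using assms(3) fVV by blast
  have gfu: "g (f u) = u" using gf assms(3) by auto
  let ?P = "\<lambda>FR. ((`) f ` fst FR, f ` snd FR)"
  let ?Q = "\<lambda>FR. ((`) g ` fst FR, g ` snd FR)"
  have bb: "bij_betw ?P (forests_rooted_at V E u) (forests_rooted_at V E (f u))"
  proof (rule bij_betwI[where g = ?Q])
    show "?P \<in> forests_rooted_at V E u \<rightarrow> forests_rooted_at V E (f u)"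
    proof
      fix x assume x: "x \<in> forests_rooted_at V E u"
      show "?P x \<in> forests_rooted_at V E (f u)" using A.transfer(1)[OF x assms(3)] by simp
    qed
    show "?Q \<in> forests_rooted_at V E (f u) \<rightarrow> forests_rooted_at V E u"
    proof
      fix y assume y: "y \<in> forests_rooted_at V E (f u)"
      show "?Q y \<in> forests_rooted_at V E u" using B.transfer(1)[OF y fu] gfu by simp
    qed
    show "?Q (?P x) = x" if "x \<in> forests_rooted_at V E u" for x
      using A.transfer(3)[OF that assms(3)] by simp
    show "?P (?Q y) = y" if "y \<in> forests_rooted_at V E (f u)" for y
      using B.transfer(3)[OF that fu] by simp
  qed
  have "(\<Sum>FR\<in>forests_rooted_at V E (f u). real (card (tree_of V (fst FR) (f u))))
      = (\<Sum>FR\<in>forests_rooted_at V E u. real (card (tree_of V (fst (?P FR)) (f u))))"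
    using sum.reindex_bij_betw[OF bb, of "\<lambda>FR. real (card (tree_of V (fst FR) (f u)))"] by simp
  also have "\<dots> = (\<Sum>FR\<in>forests_rooted_at V E u. real (card (tree_of V (fst FR) u)))"
    by (intro sum.cong refl) (simp add: A.transfer(2)[OF _ assms(3)])
  finally show ?thesis unfolding forest_s_def using bij_betw_same_card[OF bb] by simp
qed

theorem theorem4p6:
  fixes V :: "'a set" and E :: "'a set set"
  assumes "simple_graph V E"
  shows "(\<forall>u\<in>V. \<forall>v\<in>V. 0 \<le> ForestSim V E u v \<and> ForestSim V E u v \<le> 1)
    \<and> (\<forall>u\<in>V. \<forall>v\<in>V. ForestSim V E u v = ForestSim V E v u)
    \<and> (\<forall>u\<in>V. \<forall>v\<in>V. auto_equiv V E u v \<longrightarrow> ForestSim V E u v = 1)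
    \<and> (\<forall>u\<in>V. \<forall>u'\<in>V. \<forall>v\<in>V. auto_equiv V E u u' \<longrightarrow> ForestSim V E u v = ForestSim V E u' v)
    \<and> (\<forall>u\<in>V. \<forall>u'\<in>V. \<forall>v\<in>V. ForestDist V E u v \<le> ForestDist V E u u' + ForestDist V E u' v)"
proof -
  have pos: "forest_s V E u > 0" if "u \<in> V" for u using s_ge1[OF assms that] by linarith
  have eq: "forest_s V E u = forest_s V E v" if "u \<in> V" "auto_equiv V E u v" for u v
    using that s_aut[OF assms] unfolding auto_equiv_def by metis
  have P1: "\<forall>u\<in>V. \<forall>v\<in>V. 0 \<le> ForestSim V E u v \<and> ForestSim V E u v \<le> 1"
  proof (intro ballI)
    fix u v assume "u \<in> V" "v \<in> V"
    then have "forest_s V E u > 0" "forest_s V E v > 0" using pos by auto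
    then show "0 \<le> ForestSim V E u v \<and> ForestSim V E u v \<le> 1"
      unfolding ForestSim_def by (auto simp: min_def max_def)
  qed
  have P2: "\<forall>u\<in>V. \<forall>v\<in>V. ForestSim V E u v = ForestSim V E v u"
    unfolding ForestSim_def by (simp add: min.commute max.commute)
  have P3: "\<forall>u\<in>V. \<forall>v\<in>V. auto_equiv V E u v \<longrightarrow> ForestSim V E u v = 1"
  proof (intro ballI impI)
    fix u v assume "u \<in> V" "v \<in> V" "auto_equiv V E u v"
    then show "ForestSim V E u v = 1" using eq pos[of u] unfolding ForestSim_def by simp
  qed
  have P4: "\<forall>u\<in>V. \<forall>u'\<in>V. \<forall>v\<in>V. auto_equiv V E u u' \<longrightarrow> ForestSim V E u v = ForestSim V E u' v"
    unfolding ForestSim_def using eq by simp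
  have P5: "\<forall>u\<in>V. \<forall>u'\<in>V. \<forall>v\<in>V. ForestDist V E u v \<le> ForestDist V E u u' + ForestDist V E u' v"
  proof (intro ballI)
    fix u u' v assume "u \<in> V" "u' \<in> V" "v \<in> V"
    then show "ForestDist V E u v \<le> ForestDist V E u u' + ForestDist V E u' v"
      unfolding ForestDist_def ForestSim_def using qtri[OF pos pos pos] by simp
  qed
  show ?thesis using P1 P2 P3 P4 P5 by blast
qed

end
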